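(* Let $S$ be finite, $r$ transition rates of an irreducible random walk on $S$ reversible w.r.t. a probability $m$, with $S_\star$ decomposed into the classes $S_1^{(2)},\dots,S_{\kappa_\star}^{(2)}$ of the context, $\kappa_\star\ge2$. Let $(d_N)$ be positive with $d_N\to0$, $d_N\log N\to0$, decaying subexponentially, and $d_NN^2(\log N)^2\to0$. Then for every $1\le i\le\kappa_\star$, $$\lim_{N\to\infty}\frac{\mathrm{Cap}_N\big(\mathcal{E}_N(S_i^{(2)}),\mathcal{E}_N(S_\star\setminus S_i^{(2)})\big)}{\inf_{\eta,\zeta\in\mathcal{E}_N(S_i^{(2)})}\mathrm{Cap}_N(\{\eta\},\{\zeta\})}=0,$$ where the infimum is over distinct $\eta,\zeta$ (an infimum over the empty set being $+\infty$).
   Context: $M_\star=\max m$, $S_\star=\{x:m(x)=M_\star\}$, $m_\star=m/M_\star$. $S_1^{(2)},\dots,S_{\kappa_\star}^{(2)}$ partition $S_\star$ into irreducible components of the walk restricted to $S_\star$ (rates restricted to each class irreducible, $r=0$ between different classes). Subexponential decay: $d_Ne^{\epsilon N}\to\infty$ for every $\epsilon>0$. $\mathcal{H}_N=\{\eta\in\mathbb{N}^S:\sum\eta_x=N\}$; inclusion process jump rates $\mathbf{q}_N(\eta,\sigma^{x,y}\eta)=\eta_x(d_N+\eta_y)r(x,y)$ ($\sigma^{x,y}\eta$ moves one particle from $x$ to $y$); invariant reversible measure $\mu_N(\eta)\propto\prod_xw_N(\eta_x)m_\star(x)^{\eta_x}$, $w_N(n)=\Gamma(d_N+n)/(n!\Gamma(d_N))$.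 $\xi_N^x$: all particles at $x$; $\mathcal{E}_N(R)=\{\xi_N^x:x\in R\}$. $h_{\mathcal{A},\mathcal{B}}(\eta)=\mathbb{P}_\eta[\tau_{\mathcal{A}}<\tau_{\mathcal{B}}]$, $D_N(f)=\frac12\sum\mu_N(\eta)\mathbf{q}_N(\eta,\zeta)\{f(\zeta)-f(\eta)\}^2$, $\mathrm{Cap}_N(\mathcal{A},\mathcal{B})=D_N(h_{\mathcal{A},\mathcal{B}})$. *)

theory Defs
  imports "HOL-Analysis.Analysis"
begin

type_synonym 'a config = "'a \<Rightarrow> nat"

definition Hn :: "nat \<Rightarrow> ('a::finite) config set" where
  "Hn N = {\<eta>. (\<Sum>x\<in>UNIV. \<eta> x) = N}"

definition sigma :: "'a \<Rightarrow> 'a \<Rightarrow> 'a config \<Rightarrow> 'a config" where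
  "sigma x y \<eta> = \<eta>(x := \<eta> x - 1, y := \<eta> y + 1)"

definition qrate :: "('a::finite \<Rightarrow> 'a \<Rightarrow> real) \<Rightarrow> real \<Rightarrow> 'a config \<Rightarrow> 'a config \<Rightarrow> real" where
  "qrate r dN \<eta> \<zeta> =
     (\<Sum>(x,y)\<in>{(x,y). x \<noteq> y}.
        if 1 \<le> \<eta> x \<and> \<zeta> = sigma x y \<eta> then real (\<eta> x) * (dN + real (\<eta> y)) * r x y else 0)"

definition jump_prob :: "('a::finite \<Rightarrow> 'a \<Rightarrow> real) \<Rightarrow> real \<Rightarrow> nat \<Rightarrow> 'a config \<Rightarrow> 'a config \<Rightarrow> real" where
  "jump_prob r dN N \<eta> \<zeta> = qrate r dN \<eta> \<zeta> / (\<Sum>\<zeta>'\<in>Hn N. qrate r dN \<eta> \<zeta>')"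

text \<open>h_{A,B}(eta) = P_eta[tau_A < tau_B]: the sum, over all finite jump paths
  eta = eta_0, ..., eta_k that hit A at step k and avoid A and B before, of the path
  probabilities (the event is the disjoint union of these cylinder events).\<close>
definition hit_prob :: "('a::finite \<Rightarrow> 'a \<Rightarrow> real) \<Rightarrow> real \<Rightarrow> nat \<Rightarrow> 'a config set \<Rightarrow> 'a config set
    \<Rightarrow> 'a config \<Rightarrow> real" where
  "hit_prob r dN N A B \<eta> =
     suminf (\<lambda>k. \<Sum>xs\<in>{xs. length xs = k \<and> set xs \<subseteq> Hn N}.
        (if last (\<eta> # xs) \<in> A \<and> (\<forall>z\<in>set (butlast (\<eta> # xs)). z \<notin> A \<union> B)
         then prod_list (map (\<lambda>(a,b). jump_prob r dN N a b) (zip (\<eta> # xs) xs))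
         else 0))"

definition Mstar :: "('a::finite \<Rightarrow> real) \<Rightarrow> real" where
  "Mstar m = Max (range m)"

definition Sstar :: "('a::finite \<Rightarrow> real) \<Rightarrow> 'a set" where
  "Sstar m = {x. m x = Mstar m}"

definition mstar :: "('a::finite \<Rightarrow> real) \<Rightarrow> 'a \<Rightarrow> real" where
  "mstar m x = m x / Mstar m"

definition wN :: "real \<Rightarrow> nat \<Rightarrow> real" where
  "wN dN n = Gamma (dN + real n) / (fact n * Gamma dN)"

definition mu_weight :: "('a::finite \<Rightarrow> real) \<Rightarrow> real \<Rightarrow> 'a config \<Rightarrow> real" where
  "mu_weight m dN \<eta> = (\<Prod>x\<in>UNIV. wN dN (\<eta> x) * mstar m x ^ \<eta> x)"

definition muN :: "('a::finite \<Rightarrow> real) \<Rightarrow> real \<Rightarrow> nat \<Rightarrow> 'a config \<Rightarrow> real" where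
  "muN m dN N \<eta> = mu_weight m dN \<eta> / (\<Sum>\<zeta>\<in>Hn N. mu_weight m dN \<zeta>)"

definition Dirichlet :: "('a::finite \<Rightarrow> 'a \<Rightarrow> real) \<Rightarrow> ('a \<Rightarrow> real) \<Rightarrow> real \<Rightarrow> nat
    \<Rightarrow> ('a config \<Rightarrow> real) \<Rightarrow> real" where
  "Dirichlet r m dN N f =
     1/2 * (\<Sum>\<eta>\<in>Hn N. \<Sum>\<zeta>\<in>Hn N. muN m dN N \<eta> * qrate r dN \<eta> \<zeta> * (f \<zeta> - f \<eta>)^2)"

definition Cap :: "('a::finite \<Rightarrow> 'a \<Rightarrow> real) \<Rightarrow> ('a \<Rightarrow> real) \<Rightarrow> real \<Rightarrow> nat
    \<Rightarrow> 'a config set \<Rightarrow> 'a config set \<Rightarrow> real" where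
  "Cap r m dN N A B = Dirichlet r m dN N (hit_prob r dN N A B)"

definition xi :: "nat \<Rightarrow> 'a \<Rightarrow> 'a config" where
  "xi N x = (\<lambda>y. if y = x then N else 0)"

definition EN :: "nat \<Rightarrow> 'a set \<Rightarrow> 'a config set" where
  "EN N R = xi N ` R"

definition star_edges :: "('a::finite \<Rightarrow> 'a \<Rightarrow> real) \<Rightarrow> ('a \<Rightarrow> real) \<Rightarrow> ('a \<times> 'a) set" where
  "star_edges r m = {(x,y). x \<in> Sstar m \<and> y \<in> Sstar m \<and> r x y > 0}"

definition star_class :: "('a::finite \<Rightarrow> 'a \<Rightarrow> real) \<Rightarrow> ('a \<Rightarrow> real) \<Rightarrow> 'a \<Rightarrow> 'a set" where
  "star_class r m x = {y \<in> Sstar m. (x,y) \<in> (star_edges r m)\<^sup>*}"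

definition star_classes :: "('a::finite \<Rightarrow> 'a \<Rightarrow> real) \<Rightarrow> ('a \<Rightarrow> real) \<Rightarrow> 'a set set" where
  "star_classes r m = star_class r m ` Sstar m"

end

theory Submission
  imports Defs
begin


lemma wN_0: "0 < d \<Longrightarrow> wN d 0 = 1"
  using Gamma_real_pos[of d] by (simp add: wN_def less_imp_neq[symmetric])

lemma wN_pos: "0 < d \<Longrightarrow> 0 < wN d k"
  unfolding wN_def using Gamma_real_pos[of "d + real k"] Gamma_real_pos[of d]
  by (intro divide_pos_pos mult_pos_pos) auto

lemma wN_Suc: assumes "0 < d" shows "wN d (Suc k) * (real k + 1) = wN d k * (d + real k)"
proof -
  have np: "d + real k \<notin> \<int>\<^sub>\<le>\<^sub>0" using assms
    by (metis add_pos_nonneg nonpos_Ints_nonpos not_le of_nat_0_le_iff)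
  have g: "Gamma (d + real (Suc k)) = (d + real k) * Gamma (d + real k)"
    using Gamma_plus1[OF np] by (simp add: ac_simps)
  have f: "fact (Suc k) = (real k + 1) * (fact k :: real)" by simp
  have G: "Gamma d \<noteq> 0" using Gamma_real_pos[OF assms] by simp
  have F: "(fact k :: real) \<noteq> 0" by simp
  have k1: "real k + 1 \<noteq> 0" by linarith
  have B: "fact k * Gamma d \<noteq> 0" using G F by simp
  have "\<And>A B c. c \<noteq> 0 \<Longrightarrow> B \<noteq> 0 \<Longrightarrow> (d + real k) * A / (c * B) * c = A / B * (d + real k)"
    by (simp add: field_simps)
  from this[OF k1] have "\<And>A B. B \<noteq> 0 \<Longrightarrow> (d + real k) * A / ((real k + 1) * B) * (real k + 1) = A / B * (d + real k)" .
  from this[OF B, of "Gamma (d + real k)"] show ?thesis unfolding wN_def g f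
    by (simp add: mult.assoc)
qed

lemma harm_le_ln: "1 \<le> n \<Longrightarrow> harm n \<le> 1 + ln (real n)"
  using euler_mascheroni_sequence_decreasing[of 1 n] by (simp add: harm_def)

lemma wN_bounds:
  assumes d: "0 < d" and k: "1 \<le> k"
  shows "d \<le> wN d k * real k \<and> wN d k * real k \<le> d * exp (d * harm (k - 1))"
  using k
proof (induction k rule: dec_induct)
  case base
  then show ?case using wN_Suc[OF d, of 0] wN_0[OF d] by (simp add: harm_def)
next
  case (step k)
  have e: "wN d (Suc k) * real (Suc k) = wN d k * real k * (1 + d / real k)"
    using wN_Suc[OF d, of k] step(1) by (simp add: field_simps)
  have p: "0 \<le> d / real k" using d by simp
  have "wN d k * real k * (1 + d / real k) \<le> d * exp (d * harm (k - 1)) * exp (d / real k)"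
  proof (rule mult_mono)
    show "1 + d / real k \<le> exp (d / real k)" by (simp add: exp_ge_add_one_self add.commute)
  qed (use step(3) d p in auto)
  also have "\<dots> = d * exp (d * harm (Suc k - 1))"
  proof -
    have "harm k = harm (k - 1) + 1 / real k" using step(1)
      by (cases k) (auto simp: harm_Suc field_simps)
    then show ?thesis by (simp add: exp_add[symmetric] field_simps)
  qed
  finally have u: "wN d (Suc k) * real (Suc k) \<le> d * exp (d * harm (Suc k - 1))" using e by simp
  have "d \<le> wN d k * real k * (1 + d / real k)"
  proof -
    have "wN d k * real k * 1 \<le> wN d k * real k * (1 + d / real k)"
      by (rule mult_left_mono) (use step(3) p d in auto)
    then show ?thesis using step(3) by simp
  qed
  then show ?case using u e by simp
qed



definition Dw :: "('a::finite \<Rightarrow> 'a \<Rightarrow> real) \<Rightarrow> ('a \<Rightarrow> real) \<Rightarrow> real \<Rightarrow> nat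
    \<Rightarrow> ('a config \<Rightarrow> real) \<Rightarrow> real" where
  "Dw r m d N f = (\<Sum>\<eta>\<in>Hn N. \<Sum>\<zeta>\<in>Hn N. mu_weight m d \<eta> * qrate r d \<eta> \<zeta> * (f \<zeta> - f \<eta>)^2)"

definition Zn :: "('a::finite \<Rightarrow> real) \<Rightarrow> real \<Rightarrow> nat \<Rightarrow> real" where
  "Zn m d N = (\<Sum>\<zeta>\<in>Hn N. mu_weight m d \<zeta>)"

definition qterm :: "('a \<Rightarrow> 'a \<Rightarrow> real) \<Rightarrow> real \<Rightarrow> 'a config \<Rightarrow> 'a config \<Rightarrow> 'a \<Rightarrow> 'a \<Rightarrow> real" where
  "qterm r d \<eta> \<zeta> x y = (if 1 \<le> \<eta> x \<and> \<zeta> = sigma x y \<eta> then real (\<eta> x) * (d + real (\<eta> y)) * r x y else 0)"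

lemma qrate_alt: "qrate r d \<eta> \<zeta> = (\<Sum>(x,y)\<in>{(x,y). x \<noteq> y}. qterm r d \<eta> \<zeta> x y)"
  unfolding qrate_def qterm_def by simp

lemma Hn_sub: "Hn N \<subseteq> PiE UNIV (\<lambda>_. {..N})"
proof
  fix \<eta> :: "'a::finite config" assume "\<eta> \<in> Hn N"
  then have "\<eta> x \<le> N" for x using member_le_sum[of x UNIV \<eta>] by (simp add: Hn_def)
  then show "\<eta> \<in> PiE UNIV (\<lambda>_. {..N})" by auto
qed

lemma finite_Hn: "finite (Hn N :: ('a::finite) config set)"
  by (rule finite_subset[OF Hn_sub]) (simp add: finite_PiE)

lemma Dirichlet_Dw: "Dirichlet r m d N f = Dw r m d N f / (2 * Zn m d N)"
  unfolding Dirichlet_def Dw_def Zn_def muN_def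
  by (simp add: sum_divide_distrib mult.commute)

lemma Mstar_pos:
  assumes "\<forall>x. 0 \<le> m x" "(\<Sum>x\<in>UNIV. m x) = (1::real)"
  shows "0 < Mstar (m :: 'a::finite \<Rightarrow> real)"
proof -
  have "\<exists>x. 0 < m x"
  proof (rule ccontr)
    assume "\<not> ?thesis" then have "\<forall>x. m x = 0" using assms(1) by (meson le_less not_le)
    then show False using assms(2) by simp
  qed
  then obtain x where "0 < m x" by blast
  moreover have "m x \<le> Mstar m" unfolding Mstar_def by (rule Max_ge) auto
  ultimately show ?thesis by simp
qed

lemma mstar_bounds:
  assumes "\<forall>x. 0 \<le> m x" "(\<Sum>x\<in>UNIV. m x) = (1::real)"
  shows "0 \<le> mstar m x \<and> mstar m x \<le> 1 \<and> (mstar m x = 1 \<longleftrightarrow> x \<in> Sstar m)"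
proof -
  have M: "0 < Mstar m" by (rule Mstar_pos[OF assms])
  have "m x \<le> Mstar m" unfolding Mstar_def by (rule Max_ge) auto
  then show ?thesis using M assms(1) unfolding mstar_def Sstar_def by auto
qed

lemma mu_weight_nonneg:
  assumes "0 < d" "\<forall>x. 0 \<le> mstar m x"
  shows "0 \<le> mu_weight m d \<eta>"
  unfolding mu_weight_def using assms wN_pos[OF assms(1)]
  by (intro prod_nonneg mult_nonneg_nonneg zero_le_power) (auto simp: less_imp_le)

lemma qterm_nonneg: "\<forall>x y. 0 \<le> r x y \<Longrightarrow> 0 < d \<Longrightarrow> 0 \<le> qterm r d \<eta> \<zeta> x y"
  unfolding qterm_def by auto

lemma qrate_nonneg: "\<forall>x y. 0 \<le> r x y \<Longrightarrow> 0 < d \<Longrightarrow> 0 \<le> qrate r d \<eta> \<zeta>"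
  unfolding qrate_alt by (intro sum_nonneg) (auto intro: qterm_nonneg)

lemma prod_two:
  fixes f :: "'a::finite \<Rightarrow> real"
  assumes "x \<noteq> y"
  shows "prod f UNIV = f x * f y * prod f (UNIV - {x, y})"
proof -
  have "prod f UNIV = f x * prod f (UNIV - {x})" by (rule prod.remove) auto
  also have "prod f (UNIV - {x}) = f y * prod f (UNIV - {x} - {y})"
    by (rule prod.remove) (use assms in auto)
  finally show ?thesis by (simp add: Diff_insert2[symmetric] insert_commute mult.assoc)
qed

lemma alg_db:
  fixes W1 W0 V1 V0 a b rxy ryx d n k :: real
  assumes "W1 * (n+1) = W0*(d+n)" "V1*(k+1) = V0*(d+k)" "a*rxy = b*ryx"
  shows "W1 * a^(Suc nn) * (V0 * b^kk) * ((n+1)*(d+k)*rxy) = W0*a^nn*(V1*b^(Suc kk))*((k+1)*(d+n)*ryx)"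
proof -
  have "W1 * a^(Suc nn) * (V0 * b^kk) * ((n+1)*(d+k)*rxy) = (W1*(n+1))*(a*rxy)*(a^nn*V0*b^kk*(d+k))"
    by (simp add: algebra_simps)
  also have "\<dots> = W0*(d+n)*(b*ryx)*(a^nn*V0*b^kk*(d+k))" using assms by simp
  also have "\<dots> = W0*a^nn*((V0*(d+k))*b^(Suc kk))*((d+n)*ryx)" by (simp add: algebra_simps)
  also have "\<dots> = W0*a^nn*(V1*b^(Suc kk))*((k+1)*(d+n)*ryx)" using assms(2)[symmetric]
    by (simp add: algebra_simps)
  finally show ?thesis .
qed

lemma sigma_inv: "x \<noteq> y \<Longrightarrow> (1 \<le> \<eta> x \<and> \<zeta> = sigma x y \<eta>) \<longleftrightarrow> (1 \<le> \<zeta> y \<and> \<eta> = sigma y x \<zeta>)"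
  unfolding sigma_def by (auto simp: fun_eq_iff)

lemma db_term:
  assumes d: "0 < d" and xy: "x \<noteq> y" and rev: "mstar m x * r x y = mstar m y * r y x"
  shows "mu_weight m d \<eta> * qterm r d \<eta> \<zeta> x y = mu_weight m d \<zeta> * qterm r d \<zeta> \<eta> y x"
proof (cases "1 \<le> \<eta> x \<and> \<zeta> = sigma x y \<eta>")
  case False
  then have "\<not> (1 \<le> \<zeta> y \<and> \<eta> = sigma y x \<zeta>)" using sigma_inv[OF xy] by blast
  then show ?thesis unfolding qterm_def if_not_P[OF False] if_not_P[OF \<open>\<not> (1 \<le> \<zeta> y \<and> \<eta> = sigma y x \<zeta>)\<close>] by simp
next
  case True
  then have T2: "1 \<le> \<zeta> y \<and> \<eta> = sigma y x \<zeta>" using sigma_inv[OF xy] by blast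
  obtain n where n: "\<eta> x = Suc n" using True by (cases "\<eta> x") auto
  define k where "k = \<eta> y"
  have zx: "\<zeta> x = n" and zy: "\<zeta> y = Suc k" and zo: "\<And>u. u \<noteq> x \<Longrightarrow> u \<noteq> y \<Longrightarrow> \<zeta> u = \<eta> u"
    using True n xy unfolding sigma_def k_def by auto
  define g where "g = (\<lambda>\<theta> u. wN d (\<theta> u) * mstar m u ^ \<theta> u)"
  have R: "prod (g \<zeta>) (UNIV - {x,y}) = prod (g \<eta>) (UNIV - {x,y})"
    by (rule prod.cong) (auto simp: g_def zo)
  have we: "mu_weight m d \<eta> = g \<eta> x * g \<eta> y * prod (g \<eta>) (UNIV - {x,y})"
  proof -
    have "mu_weight m d \<eta> = prod (g \<eta>) UNIV" unfolding mu_weight_def g_def by simp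
    then show ?thesis using prod_two[OF xy, of "g \<eta>"] by simp
  qed
  have wz: "mu_weight m d \<zeta> = g \<zeta> x * g \<zeta> y * prod (g \<eta>) (UNIV - {x,y})"
  proof -
    have "mu_weight m d \<zeta> = prod (g \<zeta>) UNIV" unfolding mu_weight_def g_def by simp
    then show ?thesis using prod_two[OF xy, of "g \<zeta>"] R by simp
  qed
  have q1: "qterm r d \<eta> \<zeta> x y = (real n + 1) * (d + real k) * r x y"
    using True n unfolding qterm_def k_def by simp
  have q2: "qterm r d \<zeta> \<eta> y x = (real k + 1) * (d + real n) * r y x"
    using T2 zx zy unfolding qterm_def by simp
  have key: "g \<eta> x * g \<eta> y * ((real n + 1) * (d + real k) * r x y) =
             g \<zeta> x * g \<zeta> y * ((real k + 1) * (d + real n) * r y x)"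
    unfolding g_def n zx zy k_def[symmetric]
    by (rule alg_db[OF wN_Suc[OF d, of n] wN_Suc[OF d, of k] rev])
  define P where "P = prod (g \<eta>) (UNIV - {x,y})"
  have "mu_weight m d \<eta> * qterm r d \<eta> \<zeta> x y = (g \<eta> x * g \<eta> y * ((real n + 1) * (d + real k) * r x y)) * P"
    unfolding we q1 P_def by (simp only: ac_simps)
  also have "\<dots> = (g \<zeta> x * g \<zeta> y * ((real k + 1) * (d + real n) * r y x)) * P" by (simp only: key)
  also have "\<dots> = mu_weight m d \<zeta> * qterm r d \<zeta> \<eta> y x"
    unfolding wz q2 P_def by (simp only: ac_simps)
  finally show ?thesis .
qed

lemma detailed_balance:
  assumes d: "0 < d" and rev: "\<forall>x y. mstar m x * r x y = mstar m y * r y x"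
  shows "mu_weight m d \<eta> * qrate r d \<eta> \<zeta> = mu_weight m d \<zeta> * qrate r d \<zeta> \<eta>"
proof -
  let ?P = "{(x,y). x \<noteq> (y::'a::finite)}"
  have "mu_weight m d \<eta> * qrate r d \<eta> \<zeta> = (\<Sum>(x,y)\<in>?P. mu_weight m d \<eta> * qterm r d \<eta> \<zeta> x y)"
    unfolding qrate_alt by (simp add: sum_distrib_left case_prod_beta)
  also have "\<dots> = (\<Sum>(x,y)\<in>?P. mu_weight m d \<zeta> * qterm r d \<zeta> \<eta> y x)"
    by (rule sum.cong) (auto intro: db_term[OF d _ ] simp: rev)
  also have "\<dots> = (\<Sum>(x,y)\<in>?P. mu_weight m d \<zeta> * qterm r d \<zeta> \<eta> x y)"
    by (rule sum.reindex_bij_witness[of _ prod.swap prod.swap]) auto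
  also have "\<dots> = mu_weight m d \<zeta> * qrate r d \<zeta> \<eta>"
    unfolding qrate_alt by (simp add: sum_distrib_left case_prod_beta)
  finally show ?thesis .
qed



definition tt :: "('a::finite \<Rightarrow> 'a \<Rightarrow> real) \<Rightarrow> real \<Rightarrow> nat \<Rightarrow> 'a config set \<Rightarrow> 'a config set
    \<Rightarrow> 'a config \<Rightarrow> nat \<Rightarrow> real" where
  "tt r d N A B \<eta> k = (\<Sum>xs\<in>{xs. length xs = k \<and> set xs \<subseteq> Hn N}.
        (if last (\<eta> # xs) \<in> A \<and> (\<forall>z\<in>set (butlast (\<eta> # xs)). z \<notin> A \<union> B)
         then prod_list (map (\<lambda>(a,b). jump_prob r d N a b) (zip (\<eta> # xs) xs))
         else 0))"

lemma hit_prob_tt: "hit_prob r d N A B \<eta> = suminf (tt r d N A B \<eta>)"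
  unfolding hit_prob_def tt_def ..

lemma tt_0: "tt r d N A B \<eta> 0 = (if \<eta> \<in> A then 1 else 0)"
proof -
  have e: "{xs. length xs = 0 \<and> set xs \<subseteq> Hn N} = {[]}" by auto
  show ?thesis unfolding tt_def e by simp
qed

lemma tt_Suc: "tt r d N A B \<eta> (Suc k) =
  (if \<eta> \<notin> A \<union> B then (\<Sum>\<zeta>\<in>Hn N. jump_prob r d N \<eta> \<zeta> * tt r d N A B \<zeta> k) else 0)"
proof -
  let ?L = "{xs. length xs = k \<and> set xs \<subseteq> Hn N}"
  let ?F = "\<lambda>\<eta> xs. (if last (\<eta> # xs) \<in> A \<and> (\<forall>z\<in>set (butlast (\<eta> # xs)). z \<notin> A \<union> B)
         then prod_list (map (\<lambda>(a,b). jump_prob r d N a b) (zip (\<eta> # xs) xs)) else 0)"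
  have eq: "{xs. length xs = Suc k \<and> set xs \<subseteq> Hn N} = (\<lambda>(xs, n). n#xs) ` (?L \<times> Hn N)"
    using lists_length_Suc_eq[of "Hn N" k] by (simp add: conj_commute)
  have inj: "inj_on (\<lambda>(xs, n). n#xs) (?L \<times> Hn N)" by (auto simp: inj_on_def)
  have re: "\<And>G. (\<Sum>xs\<in>(\<lambda>(xs, n). n#xs) ` (?L \<times> Hn N). G xs) = (\<Sum>(ys,z)\<in>?L \<times> Hn N. G (z # ys))"
    unfolding sum.reindex[OF inj] comp_def by (rule sum.cong) auto
  have "tt r d N A B \<eta> (Suc k) = (\<Sum>(ys,z)\<in>?L \<times> Hn N. ?F \<eta> (z # ys))"
    unfolding tt_def eq re ..
  also have "\<dots> = (\<Sum>(ys,z)\<in>?L \<times> Hn N. if \<eta> \<notin> A \<union> B then jump_prob r d N \<eta> z * ?F z ys else 0)"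
    by (rule sum.cong) auto
  also have "\<dots> = (\<Sum>ys\<in>?L. \<Sum>z\<in>Hn N. if \<eta> \<notin> A \<union> B then jump_prob r d N \<eta> z * ?F z ys else 0)"
    by (rule sum.cartesian_product[symmetric])
  also have "\<dots> = (\<Sum>z\<in>Hn N. \<Sum>ys\<in>?L. if \<eta> \<notin> A \<union> B then jump_prob r d N \<eta> z * ?F z ys else 0)"
    by (rule sum.swap)
  also have "\<dots> = (if \<eta> \<notin> A \<union> B then (\<Sum>\<zeta>\<in>Hn N. jump_prob r d N \<eta> \<zeta> * tt r d N A B \<zeta> k) else 0)"
    unfolding tt_def by (simp add: sum_distrib_left)
  finally show ?thesis .
qed

lemma jump_prob_nonneg: "\<forall>x y. 0 \<le> r x y \<Longrightarrow> 0 < d \<Longrightarrow> 0 \<le> jump_prob r d N \<eta> \<zeta>"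
  unfolding jump_prob_def using qrate_nonneg
  by (metis divide_nonneg_nonneg sum_nonneg)

lemma jump_prob_sum: "(\<Sum>\<zeta>\<in>Hn N. jump_prob r d N \<eta> \<zeta>) \<le> 1"
  unfolding jump_prob_def sum_divide_distrib[symmetric]
  by (cases "(\<Sum>\<zeta>'\<in>Hn N. qrate r d \<eta> \<zeta>') = 0") auto

context
  fixes r :: "'a::finite \<Rightarrow> 'a \<Rightarrow> real" and d :: real and N :: nat and A B :: "'a config set"
  assumes rn: "\<forall>x y. 0 \<le> r x y" and dp: "0 < d"
begin

lemma tt_nonneg: "0 \<le> tt r d N A B \<eta> k"
proof (induction k arbitrary: \<eta>)
  case 0 then show ?case by (simp add: tt_0)
next
  case (Suc k) then show ?case
    by (simp add: tt_Suc sum_nonneg jump_prob_nonneg[OF rn dp])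
qed

lemma tt_partial: "(\<Sum>k<K. tt r d N A B \<eta> k) \<le> 1"
proof (induction K arbitrary: \<eta>)
  case 0 then show ?case by simp
next
  case (Suc K)
  have "(\<Sum>k<Suc K. tt r d N A B \<eta> k) = tt r d N A B \<eta> 0 + (\<Sum>k<K. tt r d N A B \<eta> (Suc k))"
    by (rule sum.lessThan_Suc_shift)
  also have "(\<Sum>k<K. tt r d N A B \<eta> (Suc k)) =
      (if \<eta> \<notin> A \<union> B then (\<Sum>\<zeta>\<in>Hn N. jump_prob r d N \<eta> \<zeta> * (\<Sum>k<K. tt r d N A B \<zeta> k)) else 0)"
    unfolding tt_Suc by (auto simp: sum_distrib_left intro: sum.swap)
  finally have e: "(\<Sum>k<Suc K. tt r d N A B \<eta> k) = tt r d N A B \<eta> 0 +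
      (if \<eta> \<notin> A \<union> B then (\<Sum>\<zeta>\<in>Hn N. jump_prob r d N \<eta> \<zeta> * (\<Sum>k<K. tt r d N A B \<zeta> k)) else 0)" .
  have "(\<Sum>\<zeta>\<in>Hn N. jump_prob r d N \<eta> \<zeta> * (\<Sum>k<K. tt r d N A B \<zeta> k)) \<le> (\<Sum>\<zeta>\<in>Hn N. jump_prob r d N \<eta> \<zeta>)"
    by (rule sum_mono) (use Suc jump_prob_nonneg[OF rn dp] in \<open>auto intro: mult_left_le\<close>)
  also have "\<dots> \<le> 1" by (rule jump_prob_sum)
  finally show ?case unfolding e by (auto simp: tt_0)
qed

lemma tt_summable: "summable (tt r d N A B \<eta>)"
  by (rule summableI_nonneg_bounded[OF tt_nonneg tt_partial])

lemma hit_A: "\<eta> \<in> A \<Longrightarrow> hit_prob r d N A B \<eta> = 1"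
proof -
  assume a: "\<eta> \<in> A"
  have "tt r d N A B \<eta> = (\<lambda>k. if k = 0 then 1 else 0)"
    by (rule ext, case_tac k) (auto simp: tt_0 tt_Suc a)
  then show ?thesis unfolding hit_prob_tt using sums_single[of 0 "\<lambda>_. 1::real"] sums_unique
    by (metis (no_types, lifting))
qed

lemma hit_B: "\<eta> \<in> B \<Longrightarrow> \<eta> \<notin> A \<Longrightarrow> hit_prob r d N A B \<eta> = 0"
proof -
  assume a: "\<eta> \<in> B" "\<eta> \<notin> A"
  have "tt r d N A B \<eta> = (\<lambda>k. 0)"
    by (rule ext, case_tac k) (auto simp: tt_0 tt_Suc a)
  then show ?thesis unfolding hit_prob_tt by simp
qed

lemma hit_harmonic:
  assumes "\<eta> \<notin> A \<union> B"
  shows "hit_prob r d N A B \<eta> = (\<Sum>\<zeta>\<in>Hn N. jump_prob r d N \<eta> \<zeta> * hit_prob r d N A B \<zeta>)"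
proof -
  have "hit_prob r d N A B \<eta> = (\<Sum>k. tt r d N A B \<eta> (Suc k)) + tt r d N A B \<eta> 0"
    unfolding hit_prob_tt using suminf_split_head[OF tt_summable] by simp
  also have "tt r d N A B \<eta> 0 = 0" using assms by (simp add: tt_0)
  also have "(\<Sum>k. tt r d N A B \<eta> (Suc k)) = (\<Sum>k. \<Sum>\<zeta>\<in>Hn N. jump_prob r d N \<eta> \<zeta> * tt r d N A B \<zeta> k)"
    using assms by (simp add: tt_Suc)
  also have "\<dots> = (\<Sum>\<zeta>\<in>Hn N. \<Sum>k. jump_prob r d N \<eta> \<zeta> * tt r d N A B \<zeta> k)"
    by (rule suminf_sum) (intro summable_mult tt_summable)
  also have "\<dots> = (\<Sum>\<zeta>\<in>Hn N. jump_prob r d N \<eta> \<zeta> * hit_prob r d N A B \<zeta>)"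
    unfolding hit_prob_tt by (intro sum.cong refl suminf_mult tt_summable)
  finally show ?thesis by simp
qed

lemma hit_harmonic_q:
  assumes "\<eta> \<notin> A \<union> B"
  shows "(\<Sum>\<zeta>\<in>Hn N. qrate r d \<eta> \<zeta> * (hit_prob r d N A B \<zeta> - hit_prob r d N A B \<eta>)) = 0"
proof -
  let ?Q = "\<Sum>\<zeta>'\<in>Hn N. qrate r d \<eta> \<zeta>'"
  let ?h = "hit_prob r d N A B"
  show ?thesis
  proof (cases "?Q = 0")
    case True
    have "sum (qrate r d \<eta>) (Hn N) = 0 \<longleftrightarrow> (\<forall>\<zeta>\<in>Hn N. qrate r d \<eta> \<zeta> = 0)"
      by (rule sum_nonneg_eq_0_iff[OF finite_Hn]) (rule qrate_nonneg[OF rn dp])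
    then have "\<forall>\<zeta>\<in>Hn N. qrate r d \<eta> \<zeta> = 0" using True by simp
    then show ?thesis by simp
  next
    case False
    have p: "(\<Sum>\<zeta>\<in>Hn N. jump_prob r d N \<eta> \<zeta> * ?h \<zeta>) = (\<Sum>\<zeta>\<in>Hn N. qrate r d \<eta> \<zeta> * ?h \<zeta>) / ?Q"
      unfolding jump_prob_def by (simp add: sum_divide_distrib)
    have e: "(\<Sum>\<zeta>\<in>Hn N. qrate r d \<eta> \<zeta> * ?h \<zeta>) = ?Q * ?h \<eta>"
      using hit_harmonic[OF assms] False unfolding p by (simp add: field_simps)
    have "(\<Sum>\<zeta>\<in>Hn N. qrate r d \<eta> \<zeta> * (?h \<zeta> - ?h \<eta>)) =
          (\<Sum>\<zeta>\<in>Hn N. qrate r d \<eta> \<zeta> * ?h \<zeta>) - ?Q * ?h \<eta>"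
      by (simp add: sum_subtractf sum_distrib_right right_diff_distrib)
    then show ?thesis using e by simp
  qed
qed

lemma dirichlet_principle:
  fixes m :: "'a \<Rightarrow> real" and f :: "'a config \<Rightarrow> real"
  assumes db: "\<And>\<eta> \<zeta>. mu_weight m d \<eta> * qrate r d \<eta> \<zeta> = mu_weight m d \<zeta> * qrate r d \<zeta> \<eta>"
    and wn: "\<And>\<eta>. 0 \<le> mu_weight m d \<eta>"
    and bd: "\<And>\<eta>. \<eta> \<in> Hn N \<Longrightarrow> \<eta> \<in> A \<union> B \<Longrightarrow> f \<eta> = hit_prob r d N A B \<eta>"
  shows "Dw r m d N (hit_prob r d N A B) \<le> Dw r m d N f"
proof -
  let ?h = "hit_prob r d N A B"
  let ?H = "Hn N :: 'a config set"
  define g where "g = (\<lambda>\<eta>. f \<eta> - ?h \<eta>)"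
  define c where "c = (\<lambda>\<eta> \<zeta>. mu_weight m d \<eta> * qrate r d \<eta> \<zeta>)"
  have c_sym: "c \<eta> \<zeta> = c \<zeta> \<eta>" for \<eta> \<zeta> unfolding c_def by (rule db)
  have c_nn: "0 \<le> c \<eta> \<zeta>" for \<eta> \<zeta> unfolding c_def using wn qrate_nonneg[OF rn dp] by simp
  have g0: "\<eta> \<in> ?H \<Longrightarrow> \<eta> \<in> A \<union> B \<Longrightarrow> g \<eta> = 0" for \<eta> using bd by (simp add: g_def)
  have cross: "(\<Sum>\<eta>\<in>?H. \<Sum>\<zeta>\<in>?H. c \<eta> \<zeta> * (?h \<zeta> - ?h \<eta>) * (g \<zeta> - g \<eta>)) = 0"
  proof -
    have s1: "(\<Sum>\<eta>\<in>?H. \<Sum>\<zeta>\<in>?H. c \<eta> \<zeta> * (?h \<zeta> - ?h \<eta>) * g \<zeta>) =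
              (\<Sum>\<eta>\<in>?H. \<Sum>\<zeta>\<in>?H. - (c \<eta> \<zeta> * (?h \<zeta> - ?h \<eta>) * g \<eta>))"
      by (subst sum.swap) (auto intro!: sum.cong simp: c_sym algebra_simps)
    have s2: "(\<Sum>\<zeta>\<in>?H. c \<eta> \<zeta> * (?h \<zeta> - ?h \<eta>) * g \<eta>) = 0" if "\<eta> \<in> ?H" for \<eta>
    proof (cases "\<eta> \<in> A \<union> B")
      case True then show ?thesis using g0[OF that] by simp
    next
      case False
      have "(\<Sum>\<zeta>\<in>?H. c \<eta> \<zeta> * (?h \<zeta> - ?h \<eta>) * g \<eta>) =
            mu_weight m d \<eta> * g \<eta> * (\<Sum>\<zeta>\<in>?H. qrate r d \<eta> \<zeta> * (?h \<zeta> - ?h \<eta>))"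
        unfolding c_def by (simp add: sum_distrib_left algebra_simps)
      then show ?thesis using hit_harmonic_q[OF False] by simp
    qed
    have "(\<Sum>\<eta>\<in>?H. \<Sum>\<zeta>\<in>?H. c \<eta> \<zeta> * (?h \<zeta> - ?h \<eta>) * (g \<zeta> - g \<eta>)) =
          (\<Sum>\<eta>\<in>?H. \<Sum>\<zeta>\<in>?H. c \<eta> \<zeta> * (?h \<zeta> - ?h \<eta>) * g \<zeta>) -
          (\<Sum>\<eta>\<in>?H. \<Sum>\<zeta>\<in>?H. c \<eta> \<zeta> * (?h \<zeta> - ?h \<eta>) * g \<eta>)"
      by (simp add: sum_subtractf[symmetric] algebra_simps)
    also have "\<dots> = 0" unfolding s1 using s2 by (simp add: sum_negf)
    finally show ?thesis .
  qed
  have "Dw r m d N f = (\<Sum>\<eta>\<in>?H. \<Sum>\<zeta>\<in>?H. c \<eta> \<zeta> * ((?h \<zeta> - ?h \<eta>) + (g \<zeta> - g \<eta>))^2)"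
    unfolding Dw_def c_def g_def by (intro sum.cong refl) (simp add: algebra_simps)
  also have "\<dots> = Dw r m d N ?h + 2 * (\<Sum>\<eta>\<in>?H. \<Sum>\<zeta>\<in>?H. c \<eta> \<zeta> * (?h \<zeta> - ?h \<eta>) * (g \<zeta> - g \<eta>))
       + (\<Sum>\<eta>\<in>?H. \<Sum>\<zeta>\<in>?H. c \<eta> \<zeta> * (g \<zeta> - g \<eta>)^2)"
  proof -
    have "(\<Sum>\<eta>\<in>?H. \<Sum>\<zeta>\<in>?H. c \<eta> \<zeta> * ((?h \<zeta> - ?h \<eta>) + (g \<zeta> - g \<eta>))^2) =
      (\<Sum>\<eta>\<in>?H. \<Sum>\<zeta>\<in>?H. c \<eta> \<zeta> * (?h \<zeta> - ?h \<eta>)^2 + 2 * (c \<eta> \<zeta> * (?h \<zeta> - ?h \<eta>) * (g \<zeta> - g \<eta>))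
          + c \<eta> \<zeta> * (g \<zeta> - g \<eta>)^2)"
      by (intro sum.cong refl) (simp add: power2_eq_square algebra_simps)
    also have "\<dots> = (\<Sum>\<eta>\<in>?H. \<Sum>\<zeta>\<in>?H. c \<eta> \<zeta> * (?h \<zeta> - ?h \<eta>)^2)
       + 2 * (\<Sum>\<eta>\<in>?H. \<Sum>\<zeta>\<in>?H. c \<eta> \<zeta> * (?h \<zeta> - ?h \<eta>) * (g \<zeta> - g \<eta>))
       + (\<Sum>\<eta>\<in>?H. \<Sum>\<zeta>\<in>?H. c \<eta> \<zeta> * (g \<zeta> - g \<eta>)^2)"
      by (simp add: sum.distrib sum_distrib_left)
    finally show ?thesis unfolding Dw_def c_def by simp
  qed
  also have "\<dots> \<ge> Dw r m d N ?h" unfolding cross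
    using c_nn by (simp add: sum_nonneg)
  finally show ?thesis .
qed

end



lemma box_bound:
  fixes F :: "'a::finite \<Rightarrow> nat \<Rightarrow> real"
  assumes Fn: "\<And>u k. 0 \<le> F u k" and FM: "\<And>k. k \<le> N \<Longrightarrow> F x k \<le> M"
  shows "(\<Sum>\<eta>\<in>Hn N. \<Prod>u\<in>UNIV. F u (\<eta> u)) \<le> M * (\<Prod>u\<in>UNIV - {x}. \<Sum>k\<le>N. F u k)"
proof -
  define F' where "F' = F(x := (\<lambda>_. 1))"
  define G where "G = (\<lambda>\<theta>::'a config. \<Prod>u\<in>UNIV. F' u (\<theta> u))"
  define Bx where "Bx = (\<lambda>u. if u = x then {0} else {..N})"
  have M0: "0 \<le> M" using FM[of 0] Fn[of x 0] by simp
  have F'n: "0 \<le> F' u k" for u k unfolding F'_def using Fn by simp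
  have Gn: "0 \<le> G \<theta>" for \<theta> unfolding G_def using F'n by (simp add: prod_nonneg)
  have split: "(\<Prod>u\<in>UNIV. F u (\<eta> u)) = F x (\<eta> x) * G \<eta>" for \<eta>
  proof -
    have "(\<Prod>u\<in>UNIV. F u (\<eta> u)) = F x (\<eta> x) * (\<Prod>u\<in>UNIV - {x}. F u (\<eta> u))"
      by (rule prod.remove) auto
    moreover have "G \<eta> = F' x (\<eta> x) * (\<Prod>u\<in>UNIV - {x}. F' u (\<eta> u))"
      unfolding G_def by (rule prod.remove) auto
    moreover have "(\<Prod>u\<in>UNIV - {x}. F' u (\<eta> u)) = (\<Prod>u\<in>UNIV - {x}. F u (\<eta> u))"
      by (rule prod.cong) (auto simp: F'_def)
    ultimately show ?thesis by (simp add: F'_def)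
  qed
  have Gx: "G (\<eta>(x := 0)) = G \<eta>" for \<eta>
  proof -
    have "G \<theta> = F' x (\<theta> x) * (\<Prod>u\<in>UNIV - {x}. F' u (\<theta> u))" for \<theta> :: "'a config"
      unfolding G_def by (rule prod.remove) auto
    moreover have "(\<Prod>u\<in>UNIV - {x}. F' u ((\<eta>(x:=0)) u)) = (\<Prod>u\<in>UNIV - {x}. F' u (\<eta> u))"
      by (rule prod.cong) auto
    ultimately show ?thesis by (simp add: F'_def)
  qed
  have "(\<Sum>\<eta>\<in>Hn N. \<Prod>u\<in>UNIV. F u (\<eta> u)) \<le> (\<Sum>\<eta>\<in>Hn N. M * G \<eta>)"
  proof (rule sum_mono)
    fix \<eta> :: "'a config" assume "\<eta> \<in> Hn N"
    then have "\<eta> x \<le> N" using Hn_sub by (auto simp: PiE_iff)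
    then show "(\<Prod>u\<in>UNIV. F u (\<eta> u)) \<le> M * G \<eta>"
      unfolding split using FM Gn by (simp add: mult_right_mono)
  qed
  also have "\<dots> = M * (\<Sum>\<eta>\<in>Hn N. G (\<eta>(x := 0)))" by (simp add: Gx sum_distrib_left)
  also have "(\<Sum>\<eta>\<in>Hn N. G (\<eta>(x := 0))) = (\<Sum>\<theta>\<in>(\<lambda>\<eta>. \<eta>(x := 0)) ` Hn N. G \<theta>)"
  proof -
    have "inj_on (\<lambda>\<eta>. \<eta>(x := 0)) (Hn N)"
    proof (rule inj_onI)
      fix \<eta> \<eta>' assume h: "\<eta> \<in> Hn N" "\<eta>' \<in> Hn N" "\<eta>(x := 0) = \<eta>'(x := 0)"
      have o: "\<And>u. u \<noteq> x \<Longrightarrow> \<eta> u = \<eta>' u" using h(3) by (metis fun_upd_other)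
      have s: "(\<Sum>u\<in>UNIV. \<theta> u) = \<theta> x + (\<Sum>u\<in>UNIV - {x}. \<theta> u)" for \<theta> :: "'a config"
        by (rule sum.remove) auto
      have "(\<Sum>u\<in>UNIV - {x}. \<eta> u) = (\<Sum>u\<in>UNIV - {x}. \<eta>' u)" by (rule sum.cong) (auto simp: o)
      then have "\<eta> x = \<eta>' x" using h(1,2) s[of \<eta>] s[of \<eta>'] by (simp add: Hn_def)
      then show "\<eta> = \<eta>'" using o by (metis ext)
    qed
    then show ?thesis by (simp add: sum.reindex)
  qed
  also have "\<dots> \<le> (\<Sum>\<theta>\<in>PiE UNIV Bx. G \<theta>)"
  proof (rule sum_mono2)
    show "finite (PiE UNIV Bx)" unfolding Bx_def by (auto intro!: finite_PiE)
    show "(\<lambda>\<eta>. \<eta>(x := 0)) ` Hn N \<subseteq> PiE UNIV Bx"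
      using Hn_sub unfolding Bx_def by (fastforce simp: PiE_iff)
  qed (rule Gn)
  also have "\<dots> = (\<Prod>u\<in>UNIV. \<Sum>k\<in>Bx u. F' u k)"
    unfolding G_def by (rule prod_sum_PiE[symmetric]) (auto simp: Bx_def)
  also have "\<dots> = (\<Sum>k\<in>Bx x. F' x k) * (\<Prod>u\<in>UNIV - {x}. \<Sum>k\<in>Bx u. F' u k)"
    by (rule prod.remove) auto
  also have "\<dots> = (\<Prod>u\<in>UNIV - {x}. \<Sum>k\<le>N. F u k)"
    by (auto simp: Bx_def F'_def intro!: prod.cong)
  finally show ?thesis using M0 by (simp add: mult_left_mono)
qed



lemma harm_shift: "(\<Sum>i<N. 1 / real (Suc i)) = (harm N :: real)"
proof (induction N)
  case 0 then show ?case by (simp add: harm_def)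
next
  case (Suc N) then show ?case by (simp add: harm_Suc divide_inverse)
qed

context
  fixes d :: real and N :: nat and m :: "'a::finite \<Rightarrow> real"
  assumes dp: "0 < d" and d1: "d \<le> 1" and dh: "d * harm N \<le> 1"
    and ms: "\<And>u. 0 \<le> mstar m u \<and> mstar m u \<le> 1"
begin

lemma w_le: assumes "1 \<le> k" "k \<le> N" shows "wN d k * real k \<le> exp 1 * d"
proof -
  have "harm (k - 1) \<le> (harm N :: real)" using assms by (intro harm_mono) auto
  then have "d * harm (k - 1) \<le> d * harm N" using dp by (simp add: mult_left_mono)
  then have "d * harm (k - 1) \<le> 1" using dh by linarith
  then have "exp (d * harm (k - 1)) \<le> exp 1" by simp
  then have "d * exp (d * harm (k - 1)) \<le> exp 1 * d" using dp by (simp add: mult.commute)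
  then show ?thesis using wN_bounds[OF dp assms(1)] by linarith
qed

lemma w_le': assumes "1 \<le> k" "k \<le> N" shows "wN d k \<le> exp 1 * d / real k"
  using w_le[OF assms] assms by (simp add: field_simps)

lemma wd_bound: assumes "k \<le> N" shows "wN d k * (d + real k) \<le> 2 * exp 1 * d"
proof (cases "k = 0")
  case True
  have "d * 1 \<le> d * (2 * exp 1)"
    by (rule mult_left_mono) (use dp exp_ge_add_one_self[of "1::real"] in auto)
  then have "d \<le> 2 * exp 1 * d" by (simp add: mult.commute)
  then show ?thesis using wN_0[OF dp] True by simp
next
  case False
  then have k1: "1 \<le> k" by simp
  have wp: "0 < wN d k" by (rule wN_pos[OF dp])
  have "wN d k * (d + real k) = d * wN d k + wN d k * real k" by (simp add: algebra_simps)
  also have "\<dots> \<le> 1 * (exp 1 * d / real k) + exp 1 * d"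
  proof (rule add_mono)
    show "d * wN d k \<le> 1 * (exp 1 * d / real k)"
      by (rule mult_mono) (use w_le'[OF k1 assms] d1 wp in auto)
  qed (use w_le[OF k1 assms] in auto)
  also have "\<dots> \<le> 2 * exp 1 * d" using k1 dp by (simp add: field_simps)
  finally show ?thesis .
qed

lemma Fs_bound: assumes "k \<le> N"
  shows "wN d k * mstar m u ^ k * (d + real k) \<le> 2 * exp 1 * d * mstar m u ^ k"
proof -
  have "0 \<le> mstar m u ^ k" using ms[of u] by simp
  then have "wN d k * (d + real k) * mstar m u ^ k \<le> 2 * exp 1 * d * mstar m u ^ k"
    by (rule mult_right_mono[OF wd_bound[OF assms]])
  then show ?thesis by (simp add: ac_simps)
qed

lemma Ft_bound: assumes "k \<le> N" shows "wN d k * mstar m u ^ k * (d + real k) \<le> 2 * exp 1 * d"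
proof -
  have "mstar m u ^ k \<le> 1" using ms[of u] by (simp add: power_le_one)
  moreover have "0 \<le> 2 * exp 1 * d" using dp by simp
  ultimately have "2 * exp 1 * d * mstar m u ^ k \<le> 2 * exp 1 * d" by (simp add: mult_left_le)
  then show ?thesis using Fs_bound[OF assms, of u] by linarith
qed

lemma Fo_sum: "(\<Sum>k\<le>N. wN d k * mstar m u ^ k) \<le> 1 + exp 1"
proof -
  have "(\<Sum>k\<le>N. wN d k * mstar m u ^ k) = wN d 0 * mstar m u ^ 0 + (\<Sum>i<N. wN d (Suc i) * mstar m u ^ Suc i)"
    by (rule sum.atMost_shift)
  also have "(\<Sum>i<N. wN d (Suc i) * mstar m u ^ Suc i) \<le> (\<Sum>i<N. exp 1 * d * (1 / real (Suc i)))"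
  proof (rule sum_mono)
    fix i assume "i \<in> {..<N}"
    then have a: "wN d (Suc i) \<le> exp 1 * d / real (Suc i)" by (intro w_le') auto
    have b: "mstar m u ^ Suc i \<le> 1" by (rule power_le_one) (use ms[of u] in auto)
    have c: "0 < wN d (Suc i)" by (rule wN_pos[OF dp])
    have "wN d (Suc i) * mstar m u ^ Suc i \<le> wN d (Suc i)"
      by (rule mult_left_le) (use b c in auto)
    then show "wN d (Suc i) * mstar m u ^ Suc i \<le> exp 1 * d * (1 / real (Suc i))" using a by simp
  qed
  also have "\<dots> = exp 1 * d * (\<Sum>i<N. 1 / real (Suc i))" by (rule sum_distrib_left[symmetric])
  also have "\<dots> = exp 1 * (d * harm N)" by (simp only: harm_shift mult.assoc)
  also have "\<dots> \<le> exp 1" using dh by simp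
  finally show ?thesis using wN_0[OF dp] by simp
qed

lemma Fs_sum: assumes "mstar m u < 1"
  shows "(\<Sum>k\<le>N. wN d k * mstar m u ^ k * (d + real k)) \<le> 2 * exp 1 * d / (1 - mstar m u)"
proof -
  let ?a = "mstar m u"
  have "(\<Sum>k\<le>N. wN d k * ?a ^ k * (d + real k)) \<le> (\<Sum>k\<le>N. 2 * exp 1 * d * ?a ^ k)"
    by (rule sum_mono) (rule Fs_bound, simp)
  also have "\<dots> = 2 * exp 1 * d * (\<Sum>k<Suc N. ?a ^ k)" by (simp add: sum_distrib_left lessThan_Suc_atMost)
  also have "(\<Sum>k<Suc N. ?a ^ k) = (1 - ?a ^ Suc N) / (1 - ?a)"
  proof -
    have "?a \<noteq> 1" using assms by simp
    then show ?thesis by (simp only: sum_gp_strict if_not_P if_False)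
  qed
  also have "\<dots> \<le> 1 / (1 - ?a)" using assms ms[of u] by (intro divide_right_mono) auto
  finally show ?thesis using dp by (simp add: mult_left_mono)
qed

lemma pair_bound:
  assumes st: "s \<noteq> t" and as: "mstar m s < 1"
  shows "(\<Sum>\<eta>\<in>Hn N. mu_weight m d \<eta> * (d + real (\<eta> s)) * (d + real (\<eta> t)))
     \<le> 4 * exp 1 ^ 2 * (1 + exp 1) ^ CARD('a) / (1 - mstar m s) * d^2"
proof -
  define F where "F = (\<lambda>u k. wN d k * mstar m u ^ k * (if u = s then d + real k else 1) * (if u = t then d + real k else 1))"
  have prodF: "(\<Prod>u\<in>UNIV. F u (\<eta> u)) = mu_weight m d \<eta> * (d + real (\<eta> s)) * (d + real (\<eta> t))" for \<eta> :: "'a config"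
    unfolding F_def mu_weight_def prod.distrib by (simp add: prod.delta)
  have Fn: "0 \<le> F u k" for u k unfolding F_def using wN_pos[OF dp, of k] ms[of u] dp by auto
  have FM: "F t k \<le> 2 * exp 1 * d" if "k \<le> N" for k
    unfolding F_def using st Ft_bound[OF that, of t] by simp
  have "(\<Sum>\<eta>\<in>Hn N. \<Prod>u\<in>UNIV. F u (\<eta> u)) \<le> 2 * exp 1 * d * (\<Prod>u\<in>UNIV - {t}. \<Sum>k\<le>N. F u k)"
    by (rule box_bound[where F=F and x=t, OF Fn FM])
  also have "(\<Prod>u\<in>UNIV - {t}. \<Sum>k\<le>N. F u k) = (\<Sum>k\<le>N. F s k) * (\<Prod>u\<in>UNIV - {t} - {s}. \<Sum>k\<le>N. F u k)"
    by (rule prod.remove) (use st in auto)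
  also have "\<dots> \<le> (2 * exp 1 * d / (1 - mstar m s)) * (1 + exp 1) ^ CARD('a)"
  proof (rule mult_mono)
    show "(\<Sum>k\<le>N. F s k) \<le> 2 * exp 1 * d / (1 - mstar m s)"
      unfolding F_def using st Fs_sum[OF as] by simp
    have "(\<Prod>u\<in>UNIV - {t} - {s}. \<Sum>k\<le>N. F u k) \<le> (\<Prod>u\<in>UNIV - {t} - {s}. 1 + exp 1)"
    proof (rule prod_mono)
      fix u assume "u \<in> UNIV - {t} - {s}"
      then have "(\<Sum>k\<le>N. F u k) = (\<Sum>k\<le>N. wN d k * mstar m u ^ k)" unfolding F_def by simp
      then show "0 \<le> (\<Sum>k\<le>N. F u k) \<and> (\<Sum>k\<le>N. F u k) \<le> 1 + exp 1"
        using Fo_sum[of u] sum_nonneg[of "{..N}" "F u"] Fn by simp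
    qed
    also have "\<dots> = (1 + exp 1) ^ card (UNIV - {t} - {s} :: 'a set)" by simp
    also have "\<dots> \<le> (1 + exp 1) ^ CARD('a)"
      by (rule power_increasing) (auto intro: card_mono)
    finally show "(\<Prod>u\<in>UNIV - {t} - {s}. \<Sum>k\<le>N. F u k) \<le> (1 + exp 1) ^ CARD('a)" .
    show "0 \<le> (\<Prod>u\<in>UNIV - {t} - {s}. \<Sum>k\<le>N. F u k)" using Fn by (simp add: sum_nonneg prod_nonneg)
    show "0 \<le> 2 * exp 1 * d / (1 - mstar m s)" using dp as by simp
  qed
  finally have "(\<Sum>\<eta>\<in>Hn N. \<Prod>u\<in>UNIV. F u (\<eta> u)) \<le>
      2 * exp 1 * d * ((2 * exp 1 * d / (1 - mstar m s)) * (1 + exp 1) ^ CARD('a))"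
    using dp by (simp add: mult_left_mono)
  also have "\<dots> = 4 * exp 1 ^ 2 * (1 + exp 1) ^ CARD('a) / (1 - mstar m s) * d^2"
    by (simp add: power2_eq_square field_simps)
  finally show ?thesis unfolding prodF .
qed

end



definition fC :: "'a set \<Rightarrow> nat \<Rightarrow> 'a config \<Rightarrow> real" where
  "fC C N \<eta> = (\<Sum>u\<in>C. real (\<eta> u)) / real N"

definition kap :: "('a::finite \<Rightarrow> real) \<Rightarrow> 'a \<Rightarrow> real" where
  "kap m u = 1 / (1 - mstar m u)"

definition Kc :: "'a::finite itself \<Rightarrow> real" where
  "Kc _ = 4 * exp 1 ^ 2 * (1 + exp 1) ^ CARD('a)"

lemma sigma_real: assumes "x \<noteq> y" "1 \<le> \<eta> x"
  shows "real (sigma x y \<eta> u) = real (\<eta> u) - (if u = x then 1 else 0) + (if u = y then 1 else 0)"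
  using assms unfolding sigma_def by auto

lemma fC_sigma: assumes "x \<noteq> y" "1 \<le> \<eta> x" "finite C"
  shows "fC C N (sigma x y \<eta>) - fC C N \<eta> = ((if y \<in> C then 1 else 0) - (if x \<in> C then 1 else 0)) / real N"
proof -
  have "(\<Sum>u\<in>C. real (sigma x y \<eta> u)) = (\<Sum>u\<in>C. real (\<eta> u)) - (\<Sum>u\<in>C. if u = x then 1 else 0) + (\<Sum>u\<in>C. if u = y then 1 else 0)"
    unfolding sigma_real[where x=x and y=y and \<eta>=\<eta>, OF assms(1,2)] by (simp add: sum.distrib sum_subtractf)
  then show ?thesis unfolding fC_def using assms(3) by (simp add: diff_divide_distrib add_divide_distrib)
qed

lemma inner_bound:
  fixes r :: "'a::finite \<Rightarrow> 'a \<Rightarrow> real" and C :: "'a set"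
  assumes rn: "\<forall>x y. 0 \<le> r x y" and dp: "0 < d" and wn: "0 \<le> mu_weight m d \<eta>"
    and xy: "x \<noteq> y" and N1: "1 \<le> N"
  shows "(\<Sum>\<zeta>\<in>Hn N. mu_weight m d \<eta> * qterm r d \<eta> \<zeta> x y * (fC C N \<zeta> - fC C N \<eta>)^2)
     \<le> (if (x \<in> C) \<noteq> (y \<in> C) then r x y * (mu_weight m d \<eta> * (d + real (\<eta> x)) * (d + real (\<eta> y))) / (real N)^2 else 0)"
proof -
  define T where "T = (if 1 \<le> \<eta> x then mu_weight m d \<eta> * (real (\<eta> x) * (d + real (\<eta> y)) * r x y) * (fC C N (sigma x y \<eta>) - fC C N \<eta>)^2 else 0)"
  have "(\<Sum>\<zeta>\<in>Hn N. mu_weight m d \<eta> * qterm r d \<eta> \<zeta> x y * (fC C N \<zeta> - fC C N \<eta>)^2)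
      = (\<Sum>\<zeta>\<in>Hn N. if \<zeta> = sigma x y \<eta> then T else 0)"
    unfolding qterm_def T_def by (intro sum.cong refl) auto
  also have "\<dots> = (if sigma x y \<eta> \<in> Hn N then T else 0)" by (simp add: finite_Hn)
  also have "\<dots> \<le> T" using wn rn dp unfolding T_def by auto
  also have "T \<le> (if (x \<in> C) \<noteq> (y \<in> C) then r x y * (mu_weight m d \<eta> * (d + real (\<eta> x)) * (d + real (\<eta> y))) / (real N)^2 else 0)"
  proof (cases "1 \<le> \<eta> x")
    case False then show ?thesis unfolding T_def using rn wn dp by auto
  next
    case True
    have fin: "finite C" by simp
    have D: "fC C N (sigma x y \<eta>) - fC C N \<eta> = ((if y \<in> C then 1 else 0) - (if x \<in> C then 1 else 0)) / real N"
      by (rule fC_sigma[where x=x and y=y and \<eta>=\<eta>, OF xy True fin])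
    show ?thesis
    proof (cases "(x \<in> C) \<noteq> (y \<in> C)")
      case False then show ?thesis unfolding T_def D by auto
    next
      case cr: True
      have sq: "(fC C N (sigma x y \<eta>) - fC C N \<eta>)^2 = 1 / (real N)^2"
        unfolding D using cr by (auto simp: power_divide)
      have "real (\<eta> x) \<le> d + real (\<eta> x)" using dp by simp
      then have "mu_weight m d \<eta> * (real (\<eta> x) * (d + real (\<eta> y)) * r x y) \<le>
                 r x y * (mu_weight m d \<eta> * (d + real (\<eta> x)) * (d + real (\<eta> y)))"
      proof -
        have "0 \<le> r x y * mu_weight m d \<eta> * (d + real (\<eta> y))" using wn rn dp by simp
        then have "real (\<eta> x) * (r x y * mu_weight m d \<eta> * (d + real (\<eta> y))) \<le>
            (d + real (\<eta> x)) * (r x y * mu_weight m d \<eta> * (d + real (\<eta> y)))"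
          using \<open>real (\<eta> x) \<le> d + real (\<eta> x)\<close> by (rule mult_right_mono[rotated])
        then show ?thesis by (simp add: ac_simps)
      qed
      then show ?thesis unfolding T_def sq using True cr by (simp add: divide_right_mono)
    qed
  qed
  finally show ?thesis .
qed

lemma Dw_test:
  fixes r :: "'a::finite \<Rightarrow> 'a \<Rightarrow> real" and C :: "'a set"
  assumes rn: "\<forall>x y. 0 \<le> r x y" and dp: "0 < d" and d1: "d \<le> 1" and dh: "d * harm N \<le> 1"
    and N1: "1 \<le> N" and ms: "\<And>u. 0 \<le> mstar m u \<and> mstar m u \<le> 1"
    and Sst: "\<And>u. mstar m u = 1 \<longleftrightarrow> u \<in> Sstar m"
    and closed: "\<And>x y. 0 < r x y \<Longrightarrow> (x \<in> C) \<noteq> (y \<in> C) \<Longrightarrow> x \<notin> Sstar m \<or> y \<notin> Sstar m"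
  shows "Dw r m d N (fC C N) \<le> (\<Sum>(x,y)\<in>{(x,y). x \<noteq> y}. r x y * Kc TYPE('a) * (kap m x + kap m y)) * d^2 / (real N)^2"
proof -
  let ?P = "{(x,y). x \<noteq> (y::'a)}"
  let ?f = "fC C N"
  define B where "B = (\<lambda>\<eta>::'a config. \<lambda>(x,y). if (x \<in> C) \<noteq> (y \<in> C) then r x y * (mu_weight m d \<eta> * (d + real (\<eta> x)) * (d + real (\<eta> y))) / (real N)^2 else 0)"
  have wn: "0 \<le> mu_weight m d \<eta>" for \<eta> by (rule mu_weight_nonneg[OF dp]) (use ms in auto)
  have kn: "0 \<le> kap m u" for u unfolding kap_def using ms[of u] by simp
  have Kcn: "0 \<le> Kc TYPE('a)" unfolding Kc_def by simp
  have "Dw r m d N ?f = (\<Sum>\<eta>\<in>Hn N. \<Sum>\<zeta>\<in>Hn N. \<Sum>p\<in>?P. mu_weight m d \<eta> * qterm r d \<eta> \<zeta> (fst p) (snd p) * (?f \<zeta> - ?f \<eta>)^2)"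
    unfolding Dw_def qrate_alt by (simp add: sum_distrib_left sum_distrib_right case_prod_unfold)
  also have "\<dots> = (\<Sum>\<eta>\<in>Hn N. \<Sum>p\<in>?P. \<Sum>\<zeta>\<in>Hn N. mu_weight m d \<eta> * qterm r d \<eta> \<zeta> (fst p) (snd p) * (?f \<zeta> - ?f \<eta>)^2)"
    by (rule sum.cong[OF refl], rule sum.swap)
  also have "\<dots> \<le> (\<Sum>\<eta>\<in>Hn N. \<Sum>p\<in>?P. B \<eta> p)"
    unfolding B_def case_prod_unfold
    by (intro sum_mono inner_bound[OF rn dp wn _ N1]) auto
  also have "\<dots> = (\<Sum>p\<in>?P. \<Sum>\<eta>\<in>Hn N. B \<eta> p)" by (rule sum.swap)
  also have "\<dots> \<le> (\<Sum>p\<in>?P. r (fst p) (snd p) * Kc TYPE('a) * (kap m (fst p) + kap m (snd p)) * d^2 / (real N)^2)"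
  proof (rule sum_mono)
    fix p assume "p \<in> ?P"
    then obtain x y where p: "p = (x,y)" and xy: "x \<noteq> y" by auto
    show "(\<Sum>\<eta>\<in>Hn N. B \<eta> p) \<le> r (fst p) (snd p) * Kc TYPE('a) * (kap m (fst p) + kap m (snd p)) * d^2 / (real N)^2"
    proof (cases "(x \<in> C) \<noteq> (y \<in> C) \<and> 0 < r x y")
      case False
      have "0 \<le> r x y" using rn by simp
      then have "r x y = 0 \<or> \<not> ((x \<in> C) \<noteq> (y \<in> C))" using False by linarith
      then have "(\<Sum>\<eta>\<in>Hn N. B \<eta> p) = 0" unfolding B_def p
        by (intro sum.neutral ballI) (elim disjE, simp_all)
      moreover have "0 \<le> r x y * Kc TYPE('a) * (kap m x + kap m y) * d^2 / (real N)^2"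
        using rn kn Kcn by simp
      ultimately show ?thesis using p by simp
    next
      case True
      have S: "(\<Sum>\<eta>\<in>Hn N. B \<eta> p) = r x y / (real N)^2 * (\<Sum>\<eta>\<in>Hn N. mu_weight m d \<eta> * (d + real (\<eta> x)) * (d + real (\<eta> y)))"
        unfolding B_def p using True by (simp add: sum_distrib_left)
      have bd: "(\<Sum>\<eta>\<in>Hn N. mu_weight m d \<eta> * (d + real (\<eta> x)) * (d + real (\<eta> y))) \<le> Kc TYPE('a) * (kap m x + kap m y) * d^2"
      proof (cases "x \<notin> Sstar m")
        case True
        then have a: "mstar m x < 1" using ms[of x] Sst[of x] by auto
        have "(\<Sum>\<eta>\<in>Hn N. mu_weight m d \<eta> * (d + real (\<eta> x)) * (d + real (\<eta> y))) \<le> Kc TYPE('a) * kap m x * d^2"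
          using pair_bound[OF dp d1 dh ms xy a] unfolding Kc_def kap_def by simp
        also have "\<dots> \<le> Kc TYPE('a) * (kap m x + kap m y) * d^2"
          using kn[of y] Kcn by (intro mult_right_mono mult_left_mono) auto
        finally show ?thesis .
      next
        case False
        then have "y \<notin> Sstar m" using closed True by blast
        then have a: "mstar m y < 1" using ms[of y] Sst[of y] by auto
        have "(\<Sum>\<eta>\<in>Hn N. mu_weight m d \<eta> * (d + real (\<eta> x)) * (d + real (\<eta> y))) =
              (\<Sum>\<eta>\<in>Hn N. mu_weight m d \<eta> * (d + real (\<eta> y)) * (d + real (\<eta> x)))"
          by (simp add: ac_simps)
        also have "\<dots> \<le> Kc TYPE('a) * kap m y * d^2"
          using pair_bound[OF dp d1 dh ms xy[symmetric] a] unfolding Kc_def kap_def by simp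
        also have "\<dots> \<le> Kc TYPE('a) * (kap m x + kap m y) * d^2"
          using kn[of x] Kcn by (intro mult_right_mono mult_left_mono) auto
        finally show ?thesis .
      qed
      have "r x y / (real N)^2 * (\<Sum>\<eta>\<in>Hn N. mu_weight m d \<eta> * (d + real (\<eta> x)) * (d + real (\<eta> y)))
          \<le> r x y / (real N)^2 * (Kc TYPE('a) * (kap m x + kap m y) * d^2)"
        by (rule mult_left_mono[OF bd]) (use rn in simp)
      moreover have "r x y / (real N)^2 * (Kc TYPE('a) * (kap m x + kap m y) * d^2) =
          r x y * Kc TYPE('a) * (kap m x + kap m y) * d^2 / (real N)^2" by simp
      ultimately show ?thesis using S p by simp
    qed
  qed
  also have "\<dots> = (\<Sum>(x,y)\<in>?P. r x y * Kc TYPE('a) * (kap m x + kap m y)) * d^2 / (real N)^2"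
    by (simp add: sum_divide_distrib sum_distrib_right case_prod_unfold)
  finally show ?thesis .
qed



lemma Dw_nonneg:
  assumes rn: "\<forall>x y. 0 \<le> r x y" and dp: "0 < d" and ms: "\<And>u. 0 \<le> mstar m u"
  shows "0 \<le> Dw r m d N g"
proof -
  have wn: "0 \<le> mu_weight m d \<eta>" for \<eta> by (rule mu_weight_nonneg[OF dp]) (use ms in auto)
  show ?thesis unfolding Dw_def using wn qrate_nonneg[OF rn dp]
    by (intro sum_nonneg mult_nonneg_nonneg) auto
qed

lemma edge_bound:
  fixes r :: "'a::finite \<Rightarrow> 'a \<Rightarrow> real"
  assumes rn: "\<forall>x y. 0 \<le> r x y" and dp: "0 < d" and ms: "\<And>u. 0 \<le> mstar m u"
    and bc: "b \<noteq> c" and mb: "mstar m b = 1" and mc: "mstar m c = 1" and rbc: "0 < r b c"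
    and N1: "1 \<le> N"
  shows "(g (xi N c) - g (xi N b))^2 \<le> real N / (d^2 * r b c) * Dw r m d N g"
proof -
  define et where "et = (\<lambda>k::nat. \<lambda>u. (if u = b then N - k else 0) + (if u = c then k else 0))"
  have etH: "et k \<in> Hn N" if "k \<le> N" for k
    unfolding Hn_def et_def using that by (simp add: sum.distrib)
  have et0: "et 0 = xi N b" unfolding et_def xi_def using bc by (auto simp: fun_eq_iff)
  have etN: "et N = xi N c" unfolding et_def xi_def using bc by (auto simp: fun_eq_iff)
  have etS: "sigma b c (et k) = et (Suc k)" if "k < N" for k
    unfolding et_def sigma_def using bc that by (auto simp: fun_eq_iff)
  have wn: "0 \<le> mu_weight m d \<eta>" for \<eta> by (rule mu_weight_nonneg[OF dp]) (use ms in auto)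
  have wet: "mu_weight m d (et k) = wN d (N - k) * wN d k" for k
  proof -
    have "mu_weight m d (et k) = (wN d (et k b) * mstar m b ^ et k b) * (wN d (et k c) * mstar m c ^ et k c)
        * (\<Prod>u\<in>UNIV - {b, c}. wN d (et k u) * mstar m u ^ et k u)"
      unfolding mu_weight_def by (rule prod_two[OF bc])
    also have "(\<Prod>u\<in>UNIV - {b, c}. wN d (et k u) * mstar m u ^ et k u) = 1"
      by (rule prod.neutral) (auto simp: et_def wN_0[OF dp])
    finally show ?thesis using bc by (simp add: et_def mb mc)
  qed
  have cond: "d^2 * r b c \<le> mu_weight m d (et k) * qrate r d (et k) (et (Suc k))" if "k < N" for k
  proof -
    have "qterm r d (et k) (et (Suc k)) b c \<le> qrate r d (et k) (et (Suc k))"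
    proof -
      have "(\<lambda>p. qterm r d (et k) (et (Suc k)) (fst p) (snd p)) (b,c) \<le>
            (\<Sum>p\<in>{(x, y). x \<noteq> y}. qterm r d (et k) (et (Suc k)) (fst p) (snd p))"
        by (rule member_le_sum) (use bc qterm_nonneg[OF rn dp] in auto)
      then show ?thesis unfolding qrate_alt by (simp add: case_prod_unfold)
    qed
    moreover have "qterm r d (et k) (et (Suc k)) b c = real (N - k) * (d + real k) * r b c"
      unfolding qterm_def using etS[OF that] that bc by (auto simp: et_def)
    ultimately have q: "real (N - k) * (d + real k) * r b c \<le> qrate r d (et k) (et (Suc k))" by simp
    have a1: "d \<le> wN d (N - k) * real (N - k)" using wN_bounds[OF dp, of "N - k"] that by auto
    have a2: "d \<le> wN d k * (d + real k)"
    proof (cases "k = 0")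
      case True then show ?thesis using wN_0[OF dp] by simp
    next
      case False
      then have "d \<le> wN d k * real k" using wN_bounds[OF dp, of k] by auto
      also have "\<dots> \<le> wN d k * (d + real k)" using wN_pos[OF dp, of k] dp by simp
      finally show ?thesis .
    qed
    have "d^2 * r b c = d * d * r b c" by (simp add: power2_eq_square)
    also have "\<dots> \<le> (wN d (N - k) * real (N - k)) * (wN d k * (d + real k)) * r b c"
    proof -
      have "d * d \<le> (wN d (N - k) * real (N - k)) * (wN d k * (d + real k))"
        by (rule mult_mono[OF a1 a2]) (use a1 dp in linarith)+
      then show ?thesis using rbc by (intro mult_right_mono) auto
    qed
    also have "\<dots> = mu_weight m d (et k) * (real (N - k) * (d + real k) * r b c)"
      unfolding wet by (simp add: ac_simps)
    also have "\<dots> \<le> mu_weight m d (et k) * qrate r d (et k) (et (Suc k))"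
      by (rule mult_left_mono[OF q wn])
    finally show ?thesis .
  qed
  define D where "D = (\<lambda>k. g (et (Suc k)) - g (et k))"
  have tel: "(\<Sum>k<N. D k) = g (xi N c) - g (xi N b)"
    unfolding D_def using sum_lessThan_telescope[of "\<lambda>k. g (et k)" N] et0 etN by simp
  have CS: "(\<Sum>k<N. D k)^2 \<le> real N * (\<Sum>k<N. (D k)^2)"
    using Cauchy_Schwarz_ineq_sum[of "\<lambda>_. 1::real" D "{..<N}"] by simp
  let ?F = "\<lambda>(\<eta>, \<zeta>). mu_weight m d \<eta> * qrate r d \<eta> \<zeta> * (g \<zeta> - g \<eta>)^2"
  have Fn: "0 \<le> ?F p" for p using wn qrate_nonneg[OF rn dp] by (auto simp: case_prod_unfold)
  have inj: "inj_on (\<lambda>k. (et k, et (Suc k))) {..<N}"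
  proof (rule inj_onI)
    fix i j assume "(et i, et (Suc i)) = (et j, et (Suc j))"
    then have "et i c = et j c" by simp
    then show "i = j" unfolding et_def using bc by simp
  qed
  have "d^2 * r b c * (\<Sum>k<N. (D k)^2) = (\<Sum>k<N. d^2 * r b c * (D k)^2)" by (simp add: sum_distrib_left)
  also have "\<dots> \<le> (\<Sum>k<N. ?F (et k, et (Suc k)))"
    unfolding D_def by (intro sum_mono) (simp add: mult_right_mono cond)
  also have "\<dots> = (\<Sum>p\<in>(\<lambda>k. (et k, et (Suc k))) ` {..<N}. ?F p)"
    by (rule sum.reindex[OF inj, symmetric, unfolded comp_def])
  also have "\<dots> \<le> (\<Sum>p\<in>Hn N \<times> Hn N. ?F p)"
    by (rule sum_mono2) (use finite_Hn etH Fn in auto)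
  also have "\<dots> = Dw r m d N g"
    unfolding Dw_def by (simp add: sum.cartesian_product)
  finally have main: "d^2 * r b c * (\<Sum>k<N. (D k)^2) \<le> Dw r m d N g" .
  have pos: "0 < d^2 * r b c" using dp rbc by simp
  have "(g (xi N c) - g (xi N b))^2 \<le> real N * (\<Sum>k<N. (D k)^2)" using CS tel by simp
  also have "\<dots> \<le> real N * (Dw r m d N g / (d^2 * r b c))"
    using main pos by (intro mult_left_mono) (auto simp: field_simps)
  finally show ?thesis by simp
qed



lemma sq_tri: fixes a b c :: real shows "(a - c)^2 \<le> 2*(a-b)^2 + 2*(b-c)^2"
proof -
  have "0 \<le> ((a-b) - (b-c))^2" by simp
  then show ?thesis by (simp add: power2_eq_square algebra_simps)
qed

lemma ereal_ratio:
  fixes a U L :: real and b :: ereal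
  assumes "0 \<le> a" "a \<le> U" "0 < L" "ereal L \<le> b"
  shows "0 \<le> ereal a / b \<and> ereal a / b \<le> ereal (U / L)"
proof (cases b)
  case (real \<beta>)
  then have bL: "L \<le> \<beta>" "0 < \<beta>" using assms by auto
  have "ereal a / b = ereal (a / \<beta>)" using real bL by simp
  moreover have "a / \<beta> \<le> U / L" using assms bL by (intro frac_le) auto
  moreover have "0 \<le> a / \<beta>" using assms bL by simp
  ultimately show ?thesis by simp
next
  case PInf
  have "0 \<le> U / L" using assms by simp
  then show ?thesis using PInf by simp
next
  case MInf then show ?thesis using assms by simp
qed

lemma LB_class:
  fixes r :: "'a::finite \<Rightarrow> 'a \<Rightarrow> real" and d :: "nat \<Rightarrow> real"
  assumes rn: "\<forall>x y. 0 \<le> r x y" and dp: "\<forall>N. 0 < d N" and ms: "\<And>u. 0 \<le> mstar m u"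
    and Sst: "\<And>u. mstar m u = 1 \<longleftrightarrow> u \<in> Sstar m"
    and path: "(x0, x) \<in> (star_edges r m)\<^sup>*"
  shows "\<exists>K>0. \<forall>N\<ge>1. \<forall>g. (g (xi N x) - g (xi N x0))^2 \<le> K * real N / (d N)^2 * Dw r m (d N) N g"
  using path
proof (induction rule: rtrancl_induct)
  case base
  show ?case
  proof (intro exI[of _ 1] conjI allI impI)
    fix N :: nat and g :: "'a config \<Rightarrow> real" assume "1 \<le> N"
    have "0 \<le> Dw r m (d N) N g" by (rule Dw_nonneg[OF rn dp[rule_format] ms])
    then show "(g (xi N x0) - g (xi N x0))^2 \<le> 1 * real N / (d N)^2 * Dw r m (d N) N g" by simp
  qed simp
next
  case (step y z)
  then obtain K where K: "K > 0" and KB: "\<forall>N\<ge>1. \<forall>g. (g (xi N y) - g (xi N x0))^2 \<le> K * real N / (d N)^2 * Dw r m (d N) N g"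
    by blast
  have yz: "y \<in> Sstar m" "z \<in> Sstar m" "0 < r y z" using step(2) unfolding star_edges_def by auto
  show ?case
  proof (cases "y = z")
    case True then show ?thesis using K KB by blast
  next
    case False
    define K2 where "K2 = 2 * K + 2 / r y z"
    show ?thesis
    proof (intro exI[of _ K2] conjI allI impI)
      show "0 < K2" unfolding K2_def using K yz(3) by (intro add_pos_pos) auto
      fix N :: nat and g :: "'a config \<Rightarrow> real" assume N1: "1 \<le> N"
      have Dn: "0 \<le> Dw r m (d N) N g" by (rule Dw_nonneg[OF rn dp[rule_format] ms])
      have e: "(g (xi N z) - g (xi N y))^2 \<le> real N / ((d N)^2 * r y z) * Dw r m (d N) N g"
        by (rule edge_bound[OF rn dp[rule_format] ms False]) (use yz Sst N1 in auto)
      have "(g (xi N z) - g (xi N x0))^2 \<le> 2 * (g (xi N z) - g (xi N y))^2 + 2 * (g (xi N y) - g (xi N x0))^2"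
        by (rule sq_tri)
      also have "\<dots> \<le> 2 * (real N / ((d N)^2 * r y z) * Dw r m (d N) N g) + 2 * (K * real N / (d N)^2 * Dw r m (d N) N g)"
        using e KB N1 by (intro add_mono mult_left_mono) auto
      also have "\<dots> = K2 * real N / (d N)^2 * Dw r m (d N) N g"
      proof -
        have "d N \<noteq> 0" using dp by (metis less_irrefl)
        then show ?thesis unfolding K2_def using yz by (simp add: field_simps)
      qed
      finally show "(g (xi N z) - g (xi N x0))^2 \<le> K2 * real N / (d N)^2 * Dw r m (d N) N g" .
    qed
  qed
qed



theorem proposition9p1:
  fixes r :: "'a::finite \<Rightarrow> 'a \<Rightarrow> real" and m :: "'a \<Rightarrow> real" and d :: "nat \<Rightarrow> real"
  assumes r_nonneg: "\<forall>x y. 0 \<le> r x y"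
    and irred: "\<forall>x y. (x, y) \<in> {(a, b). 0 < r a b}\<^sup>*"
    and m_nonneg: "\<forall>x. 0 \<le> m x"
    and m_prob: "(\<Sum>x\<in>UNIV. m x) = 1"
    and reversible: "\<forall>x y. m x * r x y = m y * r y x"
    and kappa: "card (star_classes r m) \<ge> 2"
    and d_pos: "\<forall>N. 0 < d N"
    and d_lim: "d \<longlonglongrightarrow> 0"
    and d_log: "(\<lambda>N. d N * ln (real N)) \<longlonglongrightarrow> 0"
    and d_subexp: "\<forall>\<epsilon>>0. filterlim (\<lambda>N. d N * exp (\<epsilon> * real N)) at_top sequentially"
    and d_N2log2: "(\<lambda>N. d N * (real N)\<^sup>2 * (ln (real N))\<^sup>2) \<longlonglongrightarrow> 0"
  shows "\<forall>C\<in>star_classes r m.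
    (\<lambda>N. ereal (Cap r m (d N) N (EN N C) (EN N (Sstar m - C)))
         / (INF p\<in>{(\<eta>, \<zeta>). \<eta> \<in> EN N C \<and> \<zeta> \<in> EN N C \<and> \<eta> \<noteq> \<zeta>}.
              ereal (Cap r m (d N) N {fst p} {snd p})))
    \<longlonglongrightarrow> 0"
proof
  fix C assume C: "C \<in> star_classes r m"
  then obtain x0 where x0: "x0 \<in> Sstar m" and Cdef: "C = star_class r m x0"
    by (auto simp: star_classes_def)
  have Mp: "0 < Mstar m" by (rule Mstar_pos[OF m_nonneg m_prob])
  have msb: "\<And>u. 0 \<le> mstar m u \<and> mstar m u \<le> 1" using mstar_bounds[OF m_nonneg m_prob] by blast
  have ms0: "\<And>u. 0 \<le> mstar m u" using msb by blast
  have Sst: "\<And>u. mstar m u = 1 \<longleftrightarrow> u \<in> Sstar m" using mstar_bounds[OF m_nonneg m_prob] by blast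
  have mrev: "\<forall>x y. mstar m x * r x y = mstar m y * r y x"
  proof (intro allI)
    fix x y
    have "mstar m x * r x y = (m x * r x y) / Mstar m" unfolding mstar_def by simp
    also have "\<dots> = (m y * r y x) / Mstar m" using reversible by simp
    also have "\<dots> = mstar m y * r y x" unfolding mstar_def by simp
    finally show "mstar m x * r x y = mstar m y * r y x" .
  qed
  have CS: "C \<subseteq> Sstar m" unfolding Cdef star_class_def by auto
  have x0C: "x0 \<in> C" unfolding Cdef star_class_def using x0 by auto
  have closed: "x \<notin> Sstar m \<or> y \<notin> Sstar m" if rxy: "0 < r x y" and cr: "(x \<in> C) \<noteq> (y \<in> C)" for x y
  proof (rule ccontr)
    assume "\<not> (x \<notin> Sstar m \<or> y \<notin> Sstar m)"
    then have xy: "x \<in> Sstar m" "y \<in> Sstar m" by auto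
    have "r y x = r x y" using mrev xy Sst by (metis mult_1)
    then have e1: "(x, y) \<in> star_edges r m" and e2: "(y, x) \<in> star_edges r m"
      using rxy xy unfolding star_edges_def by auto
    show False
    proof (cases "x \<in> C")
      case True
      then have "(x0, x) \<in> (star_edges r m)\<^sup>*" unfolding Cdef star_class_def by auto
      then have "(x0, y) \<in> (star_edges r m)\<^sup>*" using e1 by (rule rtrancl_into_rtrancl)
      then have "y \<in> C" unfolding Cdef star_class_def using xy by auto
      then show False using cr True by simp
    next
      case False
      then have "y \<in> C" using cr by simp
      then have "(x0, y) \<in> (star_edges r m)\<^sup>*" unfolding Cdef star_class_def by auto
      then have "(x0, x) \<in> (star_edges r m)\<^sup>*" using e2 by (rule rtrancl_into_rtrancl)
      then have "x \<in> C" unfolding Cdef star_class_def using xy by auto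
      then show False using False by simp
    qed
  qed
  have "\<forall>x\<in>C. \<exists>K>0. \<forall>N\<ge>1. \<forall>g. (g (xi N x) - g (xi N x0))^2 \<le> K * real N / (d N)^2 * Dw r m (d N) N g"
  proof
    fix x assume "x \<in> C"
    then have "(x0, x) \<in> (star_edges r m)\<^sup>*" unfolding Cdef star_class_def by auto
    then show "\<exists>K>0. \<forall>N\<ge>1. \<forall>g. (g (xi N x) - g (xi N x0))^2 \<le> K * real N / (d N)^2 * Dw r m (d N) N g"
      by (rule LB_class[OF r_nonneg d_pos ms0 Sst])
  qed
  then obtain Kf where Kf: "\<forall>x\<in>C. Kf x > 0 \<and> (\<forall>N\<ge>1. \<forall>g. (g (xi N x) - g (xi N x0))^2 \<le> Kf x * real N / (d N)^2 * Dw r m (d N) N g)"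
    by metis
  define K where "K = (\<Sum>x\<in>C. Kf x)"
  have KfK: "Kf x \<le> K" if "x \<in> C" for x
    unfolding K_def by (rule member_le_sum) (use that Kf in auto)
  have Kp: "0 < K" using KfK[OF x0C] Kf x0C by fastforce
  have pairLB: "(g (xi N x) - g (xi N y))^2 \<le> 4 * K * real N / (d N)^2 * Dw r m (d N) N g"
    if "1 \<le> N" "x \<in> C" "y \<in> C" for N g x y
  proof -
    have Dn: "0 \<le> Dw r m (d N) N g" by (rule Dw_nonneg[OF r_nonneg d_pos[rule_format] ms0])
    have fac: "0 \<le> real N / (d N)^2 * Dw r m (d N) N g" using Dn by simp
    have b: "(g (xi N z) - g (xi N x0))^2 \<le> K * real N / (d N)^2 * Dw r m (d N) N g" if "z \<in> C" for z
    proof -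
      have "(g (xi N z) - g (xi N x0))^2 \<le> Kf z * real N / (d N)^2 * Dw r m (d N) N g"
        using Kf that \<open>1 \<le> N\<close> by blast
      also have "\<dots> = Kf z * (real N / (d N)^2 * Dw r m (d N) N g)" by simp
      also have "\<dots> \<le> K * (real N / (d N)^2 * Dw r m (d N) N g)"
        by (rule mult_right_mono[OF KfK[OF that] fac])
      finally show ?thesis by simp
    qed
    have "(g (xi N x) - g (xi N y))^2 \<le> 2 * (g (xi N x) - g (xi N x0))^2 + 2 * (g (xi N x0) - g (xi N y))^2"
      by (rule sq_tri)
    also have "(g (xi N x0) - g (xi N y))^2 = (g (xi N y) - g (xi N x0))^2" by (simp add: power2_commute)
    finally have t: "(g (xi N x) - g (xi N y))^2 \<le> 2 * (g (xi N x) - g (xi N x0))^2 + 2 * (g (xi N y) - g (xi N x0))^2" .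
    have eq: "4 * K * real N / (d N)^2 * Dw r m (d N) N g = 4 * (K * real N / (d N)^2 * Dw r m (d N) N g)" by simp
    have gen: "\<And>A B Cc X::real. A \<le> 2*B + 2*Cc \<Longrightarrow> B \<le> X \<Longrightarrow> Cc \<le> X \<Longrightarrow> A \<le> 4*X" by linarith
    show ?thesis unfolding eq by (rule gen[OF t b[OF that(2)] b[OF that(3)]])
  qed
  define Kr where "Kr = (\<Sum>(x,y)\<in>{(x,y). x \<noteq> y}. r x y * Kc TYPE('a) * (kap m x + kap m y))"
  have Krn: "0 \<le> Kr" unfolding Kr_def
  proof (intro sum_nonneg)
    fix p :: "'a \<times> 'a"
    have "0 \<le> kap m (fst p)" "0 \<le> kap m (snd p)" unfolding kap_def using msb by auto
    moreover have "0 \<le> Kc TYPE('a)" unfolding Kc_def by simp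
    ultimately show "0 \<le> (case p of (x, y) \<Rightarrow> r x y * Kc TYPE('a) * (kap m x + kap m y))"
      using r_nonneg by (auto simp: case_prod_unfold)
  qed
  have ev: "eventually (\<lambda>N. 1 \<le> N \<and> d N \<le> 1 \<and> d N * harm N \<le> 1) sequentially"
  proof -
    have e1: "eventually (\<lambda>N. 1 \<le> N) sequentially" by (rule eventually_ge_at_top)
    have e2: "eventually (\<lambda>N. d N < 1) sequentially" using order_tendstoD(2)[OF d_lim, of 1] by simp
    have "(\<lambda>N. d N + d N * ln (real N)) \<longlonglongrightarrow> 0 + 0" by (rule tendsto_add[OF d_lim d_log])
    then have t: "(\<lambda>N. d N + d N * ln (real N)) \<longlonglongrightarrow> 0" by simp
    have e3: "eventually (\<lambda>N. d N + d N * ln (real N) < 1) sequentially"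
      using order_tendstoD(2)[OF t, of 1] by simp
    show ?thesis using e1 e2 e3
    proof eventually_elim
      case (elim N)
      have "harm N \<le> 1 + ln (real N)" by (rule harm_le_ln) (use elim in simp)
      then have "d N * harm N \<le> d N * (1 + ln (real N))" using d_pos by (intro mult_left_mono) (auto simp: less_imp_le)
      then show ?case using elim by (simp add: algebra_simps)
    qed
  qed
  define R where "R = (\<lambda>N. ereal (Cap r m (d N) N (EN N C) (EN N (Sstar m - C)))
         / (INF p\<in>{(\<eta>, \<zeta>). \<eta> \<in> EN N C \<and> \<zeta> \<in> EN N C \<and> \<eta> \<noteq> \<zeta>}.
              ereal (Cap r m (d N) N {fst p} {snd p})))"
  have bnd: "eventually (\<lambda>N. 0 \<le> R N \<and> R N \<le> ereal (4 * K * Kr / real N)) sequentially"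
    using ev
  proof (rule eventually_mono)
    fix N assume HN: "1 \<le> N \<and> d N \<le> 1 \<and> d N * harm N \<le> 1"
    then have N1: "1 \<le> N" and d1: "d N \<le> 1" and dh: "d N * harm N \<le> 1" by auto
    have dp: "0 < d N" using d_pos by simp
    let ?A = "EN N C" and ?B = "EN N (Sstar m - C)"
    let ?h = "hit_prob r (d N) N ?A ?B"
    let ?Z = "Zn m (d N) N"
    have wn: "\<And>\<eta>. 0 \<le> mu_weight m (d N) \<eta>" by (rule mu_weight_nonneg[OF dp]) (use ms0 in auto)
    have xiH: "xi N x \<in> Hn N" for x :: 'a unfolding Hn_def xi_def by simp
    have w0: "0 < mu_weight m (d N) (xi N x0)"
      unfolding mu_weight_def
    proof (rule prod_pos)
      fix u :: 'a
      have "0 < mstar m u ^ xi N x0 u" using Sst[of x0] x0 by (cases "u = x0") (auto simp: xi_def)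
      then show "0 < wN (d N) (xi N x0 u) * mstar m u ^ xi N x0 u" using wN_pos[OF dp] by simp
    qed
    have Zp: "0 < ?Z"
    proof -
      have "mu_weight m (d N) (xi N x0) \<le> ?Z" unfolding Zn_def
        by (rule member_le_sum[OF xiH]) (use wn finite_Hn in auto)
      then show ?thesis using w0 by simp
    qed
    have db: "\<And>\<eta> \<zeta>. mu_weight m (d N) \<eta> * qrate r (d N) \<eta> \<zeta> = mu_weight m (d N) \<zeta> * qrate r (d N) \<zeta> \<eta>"
      by (rule detailed_balance[OF dp mrev])
    have sumxi: "(\<Sum>u\<in>C. real (xi N x u)) = (if x \<in> C then real N else 0)" for x
    proof -
      have e: "(\<Sum>u\<in>C. real (xi N x u)) = (\<Sum>u\<in>C. if u = x then real N else 0)"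
        by (rule sum.cong) (auto simp: xi_def)
      show ?thesis unfolding e by (rule sum.delta) simp
    qed
    have bd: "fC C N \<eta> = ?h \<eta>" if "\<eta> \<in> Hn N" "\<eta> \<in> ?A \<union> ?B" for \<eta>
    proof (cases "\<eta> \<in> ?A")
      case True
      then obtain x where x: "x \<in> C" "\<eta> = xi N x" unfolding EN_def by auto
      have "fC C N \<eta> = 1" unfolding fC_def x(2) sumxi using x(1) N1 by simp
      then show ?thesis using hit_A[OF r_nonneg dp True] by simp
    next
      case False
      then have "\<eta> \<in> ?B" using that by simp
      then obtain y where y: "y \<in> Sstar m - C" "\<eta> = xi N y" unfolding EN_def by auto
      have "fC C N \<eta> = 0" unfolding fC_def y(2) sumxi using y(1) by simp
      then show ?thesis using hit_B[OF r_nonneg dp \<open>\<eta> \<in> ?B\<close> False] by simp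
    qed
    have DP: "Dw r m (d N) N ?h \<le> Dw r m (d N) N (fC C N)"
      by (rule dirichlet_principle[OF r_nonneg dp db wn bd])
    have TB: "Dw r m (d N) N (fC C N) \<le> Kr * (d N)^2 / (real N)^2"
      unfolding Kr_def by (rule Dw_test[OF r_nonneg dp d1 dh N1 msb Sst closed])
    have num: "Cap r m (d N) N ?A ?B = Dw r m (d N) N ?h / (2 * ?Z)"
      unfolding Cap_def Dirichlet_Dw ..
    have num0: "0 \<le> Cap r m (d N) N ?A ?B" unfolding num
      using Dw_nonneg[OF r_nonneg dp ms0] Zp by simp
    have numU: "Cap r m (d N) N ?A ?B \<le> Kr * (d N)^2 / (real N)^2 / (2 * ?Z)"
      unfolding num using DP TB Zp by (intro divide_right_mono) auto
    define L where "L = (d N)^2 / (4 * K * real N) / (2 * ?Z)"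
    have Lp: "0 < L" unfolding L_def using dp Kp N1 Zp by simp
    have INFb: "ereal L \<le> (INF p\<in>{(\<eta>, \<zeta>). \<eta> \<in> ?A \<and> \<zeta> \<in> ?A \<and> \<eta> \<noteq> \<zeta>}. ereal (Cap r m (d N) N {fst p} {snd p}))"
    proof (rule INF_greatest)
      fix p assume "p \<in> {(\<eta>, \<zeta>). \<eta> \<in> ?A \<and> \<zeta> \<in> ?A \<and> \<eta> \<noteq> \<zeta>}"
      then obtain x y where xy: "x \<in> C" "y \<in> C" "fst p = xi N x" "snd p = xi N y" "xi N x \<noteq> xi N y"
        unfolding EN_def by (auto simp: case_prod_unfold)
      let ?h' = "hit_prob r (d N) N {fst p} {snd p}"
      have h1: "?h' (xi N x) = 1" using hit_A[OF r_nonneg dp, of "xi N x" "{fst p}"] xy by simp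
      have h0: "?h' (xi N y) = 0" using hit_B[OF r_nonneg dp, of "xi N y" "{snd p}" "{fst p}"] xy by simp
      have "1 \<le> 4 * K * real N / (d N)^2 * Dw r m (d N) N ?h'"
        using pairLB[OF N1 xy(1,2), of ?h'] h1 h0 by simp
      then have "(d N)^2 / (4 * K * real N) \<le> Dw r m (d N) N ?h'"
        using dp Kp N1 by (simp add: field_simps)
      then have "L \<le> Dw r m (d N) N ?h' / (2 * ?Z)" unfolding L_def using Zp
        by (intro divide_right_mono) auto
      then show "ereal L \<le> ereal (Cap r m (d N) N {fst p} {snd p})"
        unfolding Cap_def Dirichlet_Dw by simp
    qed
    have rat: "0 \<le> R N \<and> R N \<le> ereal (Kr * (d N)^2 / (real N)^2 / (2 * ?Z) / L)"
      unfolding R_def by (rule ereal_ratio[OF num0 numU Lp INFb])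
    have "Kr * (d N)^2 / (real N)^2 / (2 * ?Z) / L = 4 * K * Kr / real N"
      unfolding L_def using dp Kp N1 Zp by (simp add: field_simps power2_eq_square)
    then show "0 \<le> R N \<and> R N \<le> ereal (4 * K * Kr / real N)" using rat by simp
  qed
  have lim0: "(\<lambda>N. ereal (4 * K * Kr / real N)) \<longlonglongrightarrow> 0"
  proof -
    have "(\<lambda>N. 4 * K * Kr / real N) \<longlonglongrightarrow> 0" by (rule lim_const_over_n)
    then have "(\<lambda>N. ereal (4 * K * Kr / real N)) \<longlonglongrightarrow> ereal 0" by (rule tendsto_ereal)
    then show ?thesis by (simp add: zero_ereal_def)
  qed
  have "R \<longlonglongrightarrow> 0"
    by (rule tendsto_sandwich[OF _ _ tendsto_const lim0]) (use bnd in \<open>auto elim: eventually_mono\<close>)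
  then show "(\<lambda>N. ereal (Cap r m (d N) N (EN N C) (EN N (Sstar m - C)))
         / (INF p\<in>{(\<eta>, \<zeta>). \<eta> \<in> EN N C \<and> \<zeta> \<in> EN N C \<and> \<eta> \<noteq> \<zeta>}.
              ereal (Cap r m (d N) N {fst p} {snd p})))
    \<longlonglongrightarrow> 0" unfolding R_def .
qed


end
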